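(* Let $\mathcal{U}$ be a selective nonprincipal ultrafilter on $\mathbb{N}$ and let $X$ be a reflexive Banach space. Let $(y_n)_{n\ge1}$ be a bounded sequence in $X$ and $(x_n^{*})_{n\ge1}$ a bounded sequence in $X^{*}$ with $w\text{-}\lim_{n,\mathcal{U}}y_n=0$ and $w\text{-}\lim_{n,\mathcal{U}}x_n^{*}=0$. Then there exists $B=\{t(0),t(1),\ldots\}\in\mathcal{U}$ with $t(0)<t(1)<\cdots$ such that $|x^{*}_{t(j)}(y_{t(k)})|\le 2^{-\max(j,k)}$ for all $j\ne k$.
   Context: $w\text{-}\lim_{n,\mathcal{U}}$ denotes the weak limit along the ultrafilter $\mathcal{U}$. An ultrafilter $\mathcal{U}$ on $\mathbb{N}$ is selective if (1) for every sequence $A_1,A_2,\dots$ in $\mathcal{U}$ there is $A\in\mathcal{U}$ with $A\setminus A_k$ finite for each $k$; and (2) for every partition of $\mathbb{N}$ into finite sets $A_1,A_2,\dots$ there is $A\in\mathcal{U}$ with $A\cap A_k$ a singleton for each $k$. *)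

theory Defs
  imports "HOL-Analysis.Analysis"
begin

definition ultrafilter_nat :: "nat set set \<Rightarrow> bool" where
  "ultrafilter_nat U \<longleftrightarrow>
     UNIV \<in> U \<and> {} \<notin> U \<and>
     (\<forall>A B. A \<in> U \<longrightarrow> A \<subseteq> B \<longrightarrow> B \<in> U) \<and>
     (\<forall>A B. A \<in> U \<longrightarrow> B \<in> U \<longrightarrow> A \<inter> B \<in> U) \<and>
     (\<forall>A. A \<in> U \<or> - A \<in> U)"

definition nonprincipal :: "nat set set \<Rightarrow> bool" where
  "nonprincipal U \<longleftrightarrow> (\<forall>n. {n} \<notin> U)"

definition selective :: "nat set set \<Rightarrow> bool" where
  "selective U \<longleftrightarrow>
     (\<forall>A :: nat \<Rightarrow> nat set. (\<forall>k. A k \<in> U) \<longrightarrow>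
        (\<exists>B\<in>U. \<forall>k. finite (B - A k))) \<and>
     (\<forall>A :: nat \<Rightarrow> nat set.
        (\<forall>k. finite (A k) \<and> A k \<noteq> {}) \<and>
        (\<forall>j k. j \<noteq> k \<longrightarrow> A j \<inter> A k = {}) \<and>
        (\<Union>k. A k) = UNIV \<longrightarrow>
        (\<exists>B\<in>U. \<forall>k. \<exists>m. B \<inter> A k = {m}))"

definition ulim :: "nat set set \<Rightarrow> (nat \<Rightarrow> real) \<Rightarrow> real \<Rightarrow> bool" where
  "ulim U a L \<longleftrightarrow> (\<forall>e>0. {n. \<bar>a n - L\<bar> < e} \<in> U)"

definition weak_ulim :: "nat set set \<Rightarrow> (nat \<Rightarrow> 'a::real_normed_vector) \<Rightarrow> 'a \<Rightarrow> bool" where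
  "weak_ulim U y L \<longleftrightarrow>
     (\<forall>f :: 'a \<Rightarrow>\<^sub>L real. ulim U (\<lambda>n. blinfun_apply f (y n)) (blinfun_apply f L))"

definition reflexive_space :: "'a::banach itself \<Rightarrow> bool" where
  "reflexive_space _ \<longleftrightarrow>
     (\<forall>\<phi> :: ('a \<Rightarrow>\<^sub>L real) \<Rightarrow>\<^sub>L real. \<exists>x::'a. \<forall>f. blinfun_apply \<phi> f = blinfun_apply f x)"

end

theory Submission
  imports Defs
begin

lemma uf_int: "ultrafilter_nat U \<Longrightarrow> A \<in> U \<Longrightarrow> B \<in> U \<Longrightarrow> A \<inter> B \<in> U"
  unfolding ultrafilter_nat_def by blast

lemma uf_mono: "ultrafilter_nat U \<Longrightarrow> A \<in> U \<Longrightarrow> A \<subseteq> B \<Longrightarrow> B \<in> U"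
  unfolding ultrafilter_nat_def by blast

lemma uf_Inter:
  fixes m :: nat and C :: "nat \<Rightarrow> nat set"
  assumes "ultrafilter_nat U" "\<And>i. C i \<in> U"
  shows "(\<Inter>i\<le>m. C i) \<in> U"
proof (induction m)
  case 0 then show ?case using assms by simp
next
  case (Suc m)
  have "(\<Inter>i\<le>Suc m. C i) = (\<Inter>i\<le>m. C i) \<inter> C (Suc m)"
    by (auto simp: atMost_Suc)
  then show ?case using Suc uf_int[OF assms(1)] assms(2) by simp
qed

lemma uf_infinite:
  assumes "ultrafilter_nat U" "nonprincipal U" "A \<in> U"
  shows "infinite A"
proof
  assume "finite A"
  then show False using assms(3)
  proof (induction A rule: finite_induct)
    case empty then show ?case using assms(1) unfolding ultrafilter_nat_def by blast
  next
    case (insert a F)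
    have "{a} \<notin> U" using assms(2) unfolding nonprincipal_def by blast
    then have "- {a} \<in> U" using assms(1) unfolding ultrafilter_nat_def by blast
    then have I: "insert a F \<inter> - {a} \<in> U" using uf_int[OF assms(1)] insert by blast
    have "insert a F \<inter> - {a} \<subseteq> F" by auto
    then have "F \<in> U" using uf_mono[OF assms(1) I] by blast
    then show ?case using insert by blast
  qed
qed

lemma Qlemma:
  fixes g :: "nat \<Rightarrow> nat"
  assumes U: "ultrafilter_nat U" and sel: "selective U"
    and gm: "mono g" and gg: "\<And>n. n < g n"
  shows "\<exists>P\<in>U. \<forall>b\<in>P. \<forall>c\<in>P. b < c \<longrightarrow> g b \<le> c"
proof -
  define a where "a = rec_nat 0 (\<lambda>_ r. g r)"
  have a0: "a 0 = 0" and aS: "\<And>i. a (Suc i) = g (a i)" by (simp_all add: a_def)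
  have sm: "strict_mono a" unfolding strict_mono_Suc_iff using aS gg by simp
  define A where "A i = {a i..<a (Suc i)}" for i
  have cover: "\<exists>i. a i \<le> n \<and> n < a (Suc i)" for n
  proof (induction n)
    case 0
    have "a 0 < a (Suc 0)" using sm by (simp add: strict_mono_def)
    then show ?case using a0 by (intro exI[of _ 0]) auto
  next
    case (Suc n)
    then obtain i where i: "a i \<le> n" "n < a (Suc i)" by blast
    show ?case
    proof (cases "Suc n < a (Suc i)")
      case True then show ?thesis using i by (intro exI[of _ i]) auto
    next
      case False
      then have "Suc n = a (Suc i)" using i by simp
      then show ?thesis using sm by (intro exI[of _ "Suc i"]) (auto simp: strict_mono_def)
    qed
  qed
  have disj: "j \<noteq> k \<Longrightarrow> A j \<inter> A k = {}" for j k
  proof -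
    assume "j \<noteq> k"
    then consider "Suc j \<le> k" | "Suc k \<le> j" by linarith
    then show ?thesis
    proof cases
      case 1 then have "a (Suc j) \<le> a k" using sm strict_mono_less_eq by blast
      then show ?thesis unfolding A_def by auto
    next
      case 2 then have "a (Suc k) \<le> a j" using sm strict_mono_less_eq by blast
      then show ?thesis unfolding A_def by auto
    qed
  qed
  have f1: "\<forall>k. finite (A k) \<and> A k \<noteq> {}"
  proof
    fix k
    have "a k < a (Suc k)" using sm by (simp add: strict_mono_def)
    then show "finite (A k) \<and> A k \<noteq> {}" unfolding A_def by simp
  qed
  have f3: "(\<Union>k. A k) = UNIV"
  proof (rule set_eqI)
    fix n
    obtain i where "a i \<le> n \<and> n < a (Suc i)" using cover by blast
    then show "n \<in> (\<Union>k. A k) \<longleftrightarrow> n \<in> UNIV" unfolding A_def by auto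
  qed
  have part: "(\<forall>k. finite (A k) \<and> A k \<noteq> {}) \<and> (\<forall>j k. j \<noteq> k \<longrightarrow> A j \<inter> A k = {}) \<and> (\<Union>k. A k) = UNIV"
    using f1 f3 disj by blast
  then obtain S where S: "S \<in> U" "\<And>k. \<exists>m. S \<inter> A k = {m}"
    using conjunct2[OF sel[unfolded selective_def], rule_format, OF part] by blast
  define E where "E = {n. \<exists>i. even i \<and> n \<in> A i}"
  have "\<exists>p. \<exists>Q\<in>U. \<forall>n\<in>Q. \<exists>i. n \<in> A i \<and> even i = p"
  proof (cases "E \<in> U")
    case True
    have "\<forall>n\<in>E. \<exists>i. n \<in> A i \<and> even i = True" unfolding E_def by auto
    then show ?thesis using True by blast
  next
    case False
    then have "-E \<in> U" using U unfolding ultrafilter_nat_def by blast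
    moreover have "\<forall>n\<in>-E. \<exists>i. n \<in> A i \<and> even i = False"
    proof
      fix n assume nE: "n \<in> -E"
      obtain i where "a i \<le> n \<and> n < a (Suc i)" using cover by blast
      then have ni: "n \<in> A i" unfolding A_def by simp
      then have "\<not> even i" using nE unfolding E_def by blast
      then show "\<exists>i. n \<in> A i \<and> even i = False" using ni by blast
    qed
    ultimately show ?thesis by blast
  qed
  then obtain p Q where Q: "Q \<in> U" "\<And>n. n \<in> Q \<Longrightarrow> \<exists>i. n \<in> A i \<and> even i = p" by blast
  have "S \<inter> Q \<in> U" using uf_int[OF U S(1) Q(1)] .
  moreover have "\<forall>b\<in>S \<inter> Q. \<forall>c\<in>S \<inter> Q. b < c \<longrightarrow> g b \<le> c"
  proof (intro ballI impI)
    fix b c assume b: "b \<in> S \<inter> Q" and c: "c \<in> S \<inter> Q" and bc: "b < c"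
    obtain i where i: "b \<in> A i" "even i = p" using Q(2) b by blast
    obtain i' where i': "c \<in> A i'" "even i' = p" using Q(2) c by blast
    have "i \<noteq> i'"
    proof
      assume "i = i'"
      obtain m where "S \<inter> A i = {m}" using S(2) by blast
      moreover have "b \<in> S \<inter> A i" "c \<in> S \<inter> A i" using b c i i' \<open>i = i'\<close> by auto
      ultimately have "b = c" by (metis singletonD)
      then show False using bc by simp
    qed
    have "i < i'"
    proof (rule ccontr)
      assume "\<not> i < i'"
      then have "Suc i' \<le> i" using \<open>i \<noteq> i'\<close> by simp
      then have "a (Suc i') \<le> a i" using sm strict_mono_less_eq by blast
      then show False using i i' bc unfolding A_def by auto
    qed
    moreover have "even i = even i'" using i(2) i'(2) by simp
    then have "i' \<noteq> Suc i" by auto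
    ultimately have "Suc (Suc i) \<le> i'" by linarith
    then have "a (Suc (Suc i)) \<le> a i'" using sm strict_mono_less_eq by blast
    moreover have "g b \<le> g (a (Suc i))" using i gm unfolding A_def mono_def by simp
    ultimately show "g b \<le> c" using i' aS unfolding A_def by force
  qed
  ultimately show ?thesis by blast
qed

theorem lemma3p3:
  fixes U :: "nat set set"
    and y :: "nat \<Rightarrow> 'a::banach"
    and x :: "nat \<Rightarrow> ('a \<Rightarrow>\<^sub>L real)"
  assumes "ultrafilter_nat U" and "nonprincipal U" and "selective U"
    and "reflexive_space TYPE('a)"
    and "bounded (range y)" and "bounded (range x)"
    and "weak_ulim U y 0" and "weak_ulim U x 0"
  shows "\<exists>t :: nat \<Rightarrow> nat. strict_mono t \<and> range t \<in> U \<and>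
           (\<forall>j k. j \<noteq> k \<longrightarrow> \<bar>blinfun_apply (x (t j)) (y (t k))\<bar> \<le> (1/2) ^ max j k)"
proof -
  note U = assms(1)
  have c1: "{n. \<bar>x i (y n)\<bar> < e} \<in> U" if "e > 0" for i e
  proof -
    have "ulim U (\<lambda>n. x i (y n)) (x i 0)" using assms(7) unfolding weak_ulim_def by blast
    then show ?thesis using that unfolding ulim_def by (simp add: blinfun.zero_right)
  qed
  have c2: "{n. \<bar>x n (y i)\<bar> < e} \<in> U" if "e > 0" for i e
  proof -
    have bl: "bounded_linear (\<lambda>f::'a \<Rightarrow>\<^sub>L real. blinfun_apply f (y i))"
      by (rule bounded_bilinear.bounded_linear_left[OF bounded_bilinear_blinfun_apply])
    have "ulim U (\<lambda>n. Blinfun (\<lambda>f. blinfun_apply f (y i)) (x n)) (Blinfun (\<lambda>f. blinfun_apply f (y i)) 0)"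
      using assms(8) unfolding weak_ulim_def by blast
    then have "ulim U (\<lambda>n. x n (y i)) 0"
      by (simp add: bounded_linear_Blinfun_apply[OF bl])
    then show ?thesis using that unfolding ulim_def by simp
  qed
  define C where "C m = (\<Inter>i\<le>m. {n. \<bar>x i (y n)\<bar> < (1/2)^m \<and> \<bar>x n (y i)\<bar> < (1/2)^m})" for m
  have CU: "C m \<in> U" for m
    unfolding C_def
  proof (rule uf_Inter[OF U])
    fix i
    have "{n. \<bar>x i (y n)\<bar> < (1/2)^m} \<inter> {n. \<bar>x n (y i)\<bar> < (1/2::real)^m} \<in> U"
      by (rule uf_int[OF U]) (simp_all add: c1 c2)
    then show "{n. \<bar>x i (y n)\<bar> < (1/2)^m \<and> \<bar>x n (y i)\<bar> < (1/2::real)^m} \<in> U"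
      by (simp add: Collect_conj_eq)
  qed
  have CU': "\<forall>k. C k \<in> U" using CU by blast
  obtain B1 where B1: "B1 \<in> U" "\<And>m. finite (B1 - C m)"
    using conjunct1[OF assms(3)[unfolded selective_def], rule_format, of C, OF CU] by blast
  define h where "h m = Suc (Max (B1 - C m))" for m
  have hC: "n \<in> B1 \<Longrightarrow> h m \<le> n \<Longrightarrow> n \<in> C m" for n m
  proof (rule ccontr)
    assume "n \<in> B1" "h m \<le> n" "n \<notin> C m"
    then have "n \<le> Max (B1 - C m)" using B1(2) by simp
    then show False using \<open>h m \<le> n\<close> unfolding h_def by simp
  qed
  define g where "g a = a + 1 + (\<Sum>i\<le>Suc a. h i)" for a
  have gm: "mono g" unfolding mono_def g_def
    by (intro allI impI add_mono sum_mono2) auto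
  have gg: "n < g n" for n unfolding g_def by simp
  have gh: "h (Suc a) \<le> g a" for a
  proof -
    have "h (Suc a) \<le> (\<Sum>i\<le>Suc a. h i)" by (rule member_le_sum) auto
    then show ?thesis unfolding g_def by simp
  qed
  obtain P where P: "P \<in> U" "\<And>b c. b \<in> P \<Longrightarrow> c \<in> P \<Longrightarrow> b < c \<Longrightarrow> g b \<le> c"
    using Qlemma[OF U assms(3) gm gg] by blast
  define D where "D = P \<inter> B1"
  have DU: "D \<in> U" unfolding D_def using uf_int[OF U P(1) B1(1)] .
  have inf: "infinite D" using uf_infinite[OF U assms(2) DU] .
  define t where "t = enumerate D"
  have tsm: "strict_mono t" unfolding t_def using strict_mono_enumerate[OF inf] .
  have tr: "range t = D" unfolding t_def using range_enumerate[OF inf] .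
  have tD: "t n \<in> D" for n using tr by blast
  have key: "t k \<in> C (Suc (t (k - 1)))" if "0 < k" for k
  proof -
    have "t (k - 1) < t k" using tsm that by (simp add: strict_mono_def)
    then have "g (t (k - 1)) \<le> t k" using P(2) tD unfolding D_def by blast
    then have "h (Suc (t (k - 1))) \<le> t k" using gh order_trans by blast
    then show ?thesis using hC tD unfolding D_def by blast
  qed
  have bound: "\<bar>x (t j) (y (t k))\<bar> \<le> (1/2)^k \<and> \<bar>x (t k) (y (t j))\<bar> \<le> (1/2)^k" if "j < k" for j k
  proof -
    have k0: "0 < k" using that by simp
    let ?m = "Suc (t (k - 1))"
    have "t j \<le> t (k - 1)" using tsm that by (simp add: strict_mono_less_eq)
    then have tj: "t j \<le> ?m" by simp
    have "k - 1 \<le> t (k - 1)" using seq_suble[OF tsm] by blast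
    then have km: "k \<le> ?m" using k0 by simp
    have pw: "(1/2::real)^?m \<le> (1/2)^k" using km by (rule power_decreasing) auto
    have "\<bar>x (t j) (y (t k))\<bar> < (1/2)^?m \<and> \<bar>x (t k) (y (t j))\<bar> < (1/2)^?m"
      using key[OF k0] tj unfolding C_def by blast
    then show ?thesis using pw by linarith
  qed
  have "\<forall>j k. j \<noteq> k \<longrightarrow> \<bar>x (t j) (y (t k))\<bar> \<le> (1/2) ^ max j k"
  proof (intro allI impI)
    fix j k :: nat assume "j \<noteq> k"
    then consider "j < k" | "k < j" by linarith
    then show "\<bar>x (t j) (y (t k))\<bar> \<le> (1/2) ^ max j k"
    proof cases
      case 1 then show ?thesis using bound[OF 1] by (simp add: max_def)
    next
      case 2 then show ?thesis using bound[OF 2] by (simp add: max_def)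
    qed
  qed
  then show ?thesis using tsm tr DU by blast
qed

end
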